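(* Fix $m\in\mathbb{Z}^+$ and $r\in\mathbb{N}$. Let $\mathsf{st}\colon X\to \mathbb{Z}$ be a function on a finite set $X$. If $$\sum_{x\in X:\ \mathsf{st}(x)\equiv l \pmod{2m}}\binom{\mathsf{st}(x)}{j}=\sum_{x\in X:\ \mathsf{st}(x)\equiv l+m \pmod{2m}}\binom{\mathsf{st}(x)}{j}$$ for every $l\in \mathbb{Z}_m$ and every $0\le j\le r-1$, then $\sum_{x\in X}q^{\mathsf{st}(x)}\in (1+q^m)^r\mathbb{Z}[q]$.
   Context: $\mathbb{Z}_m$ denotes the residues $\{0,1,\dots,m-1\}$. *)

theory Defs
  imports "HOL-Computational_Algebra.Polynomial" "HOL-Number_Theory.Cong"
begin

end

theory Submission
  imports Defs
begin


lemma root_mult_dvd: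
  fixes p :: "int poly"
  shows "(\<forall>j<r. poly ((pderiv^^j) p) a = 0) \<Longrightarrow> [:-a,1:]^r dvd p"
proof (induction r arbitrary: p)
  case 0
  then show ?case by simp
next
  case (Suc r)
  show ?case
  proof (cases "p = 0")
    case True then show ?thesis by simp
  next
    case False
    have pa: "poly p a = 0" using Suc.prems[rule_format, of 0] by simp
    have "\<forall>j<r. poly ((pderiv^^j) (pderiv p)) a = 0"
    proof (intro allI impI)
      fix j assume "j < r"
      then have "poly ((pderiv^^(Suc j)) p) a = 0" using Suc.prems by blast
      moreover have "(pderiv^^j) (pderiv p) = (pderiv^^(Suc j)) p"
        by (simp only: funpow_Suc_right comp_def)
      ultimately show "poly ((pderiv^^j) (pderiv p)) a = 0" by simp
    qed
    then have d: "[:-a,1:]^r dvd pderiv p" using Suc.IH by blast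
    have "pderiv p \<noteq> 0"
    proof
      assume "pderiv p = 0"
      then obtain h where "p = [:h:]" using pderiv_iszero by blast
      with pa False show False by simp
    qed
    then have "r \<le> order a (pderiv p)" using d order_divides by blast
    moreover have "order a p = Suc (order a (pderiv p))" using order_pderiv[OF False pa] .
    ultimately have "Suc r \<le> order a p" by simp
    then show ?thesis using order_divides by blast
  qed
qed

lemma pochhammer_int_zero:
  assumes "n < j"
  shows "pochhammer (int n - int j + 1) j = 0"
  unfolding pochhammer_prod
proof (rule prod_zero)
  show "\<exists>a\<in>{0..<j}. int n - int j + 1 + of_nat a = 0"
    using assms by (intro bexI[of _ "j - n - 1"]) auto
qed simp

lemma higher_pderiv_monom_at:
  "poly ((pderiv^^j) (monom (1::int) n)) (-1) = (-1)^j * (-1)^n * pochhammer (int n - int j + 1) j"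
proof (cases "j \<le> n")
  case True
  then have "(-1::int)^n = (-1)^j * (-1)^(n-j)"
    by (metis le_add_diff_inverse power_add)
  then show ?thesis using True by (simp add: higher_pderiv_monom poly_monom)
next
  case False
  then have z: "pochhammer (int n - int j + 1) j = 0" by (intro pochhammer_int_zero) auto
  show ?thesis
  proof (cases "j = n + 1")
    case True
    have "(pderiv^^j) (monom 1 n) = monom (pochhammer (int n - int j + 1) j * 1) (n - j)"
      by (rule higher_pderiv_monom) (use True in simp)
    then show ?thesis using z by simp
  next
    case False
    then have "j > n + 1" using \<open>\<not> j \<le> n\<close> by simp
    then show ?thesis using z by (simp add: higher_pderiv_monom_eq_zero)
  qed
qed

lemma pcompose_monom1: "pcompose (monom 1 t) M = M ^ t"
  by (induction t) (simp_all add: monom_Suc pcompose_pCons monom_0)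



lemma V0:
  fixes X :: "'a set" and st :: "'a \<Rightarrow> int" and m r :: nat and c :: int
  assumes hyp: "\<And>l j. l \<in> {0..<int m} \<Longrightarrow> j < r \<Longrightarrow>
      (\<Sum>x\<in>{x\<in>X. [st x = l] (mod (2 * int m))}. (of_int (st x) :: rat) gchoose j)
      = (\<Sum>x\<in>{x\<in>X. [st x = l + int m] (mod (2 * int m))}. (of_int (st x) :: rat) gchoose j)"
    and c: "c \<in> {0..<int m}"
  shows "degree P < r \<Longrightarrow> (\<Sum>x\<in>{x\<in>X. [st x = c] (mod (2 * int m))}. poly P (of_int (st x) :: rat))
      = (\<Sum>x\<in>{x\<in>X. [st x = c + int m] (mod (2 * int m))}. poly P (of_int (st x)))"
proof (induction "degree P" arbitrary: P rule: less_induct)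
  case less
  define A1 where "A1 = {x\<in>X. [st x = c] (mod (2 * int m))}"
  define A2 where "A2 = {x\<in>X. [st x = c + int m] (mod (2 * int m))}"
  define d where "d = degree P"
  define G where "G = (\<Prod>i\<in>{0..<d}. [: 1 - of_nat d + of_nat i, 1 :] :: rat poly)"
  have polyG: "poly G s = fact d * (s gchoose d)" for s
    by (simp add: G_def poly_prod pochhammer_prod gbinomial_pochhammer' algebra_simps)
  have degG: "degree G = d"
    unfolding G_def by (subst degree_prod_eq_sum_degree) auto
  have lcG: "lead_coeff G = 1"
    unfolding degG[symmetric] unfolding G_def lead_coeff_prod by simp
  have eqG: "(\<Sum>x\<in>A1. poly G (of_int (st x))) = (\<Sum>x\<in>A2. poly G (of_int (st x)))"
    using hyp[OF c, of d] less.prems unfolding polyG A1_def A2_def d_def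
    by (simp add: sum_distrib_left[symmetric])
  define P' where "P' = P - smult (lead_coeff P) G"
  have eqP': "(\<Sum>x\<in>A1. poly P' (of_int (st x))) = (\<Sum>x\<in>A2. poly P' (of_int (st x)))"
  proof (cases "P' = 0")
    case True then show ?thesis by simp
  next
    case False
    have le: "degree P' \<le> d" unfolding P'_def
      by (rule degree_diff_le) (auto simp: d_def degG)
    have "coeff P' d = 0" unfolding P'_def using lcG degG by (simp add: d_def)
    then have "degree P' \<noteq> d" using False by (metis leading_coeff_0_iff)
    with le have "degree P' < degree P" by (simp add: d_def)
    then show ?thesis using less.hyps[of P'] less.prems unfolding A1_def A2_def by simp
  qed
  have PP: "P = P' + smult (lead_coeff P) G" by (simp add: P'_def)
  have "(\<Sum>x\<in>A1. poly P (of_int (st x))) = (\<Sum>x\<in>A2. poly P (of_int (st x)))"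
    by (subst (1 2) PP) (simp add: sum.distrib sum_distrib_left[symmetric] eqP' eqG)
  then show ?case unfolding A1_def A2_def .
qed




lemma V1:
  fixes X :: "'a set" and st :: "'a \<Rightarrow> int" and m r :: nat and c :: int
  assumes "m > 0" and hyp: "\<And>l j. l \<in> {0..<int m} \<Longrightarrow> j < r \<Longrightarrow>
      (\<Sum>x\<in>{x\<in>X. [st x = l] (mod (2 * int m))}. (of_int (st x) :: rat) gchoose j)
      = (\<Sum>x\<in>{x\<in>X. [st x = l + int m] (mod (2 * int m))}. (of_int (st x) :: rat) gchoose j)"
    and deg: "degree P < r"
  shows "(\<Sum>x\<in>{x\<in>X. [st x = c] (mod (2 * int m))}. poly P (of_int (st x) :: rat))
      = (\<Sum>x\<in>{x\<in>X. [st x = c + int m] (mod (2 * int m))}. poly P (of_int (st x)))"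
proof -
  define c0 where "c0 = c mod (2 * int m)"
  have c0: "0 \<le> c0" "c0 < 2 * int m" using assms(1) by (auto simp: c0_def)
  have s1: "{x\<in>X. [st x = c] (mod (2 * int m))} = {x\<in>X. [st x = c0] (mod (2 * int m))}"
    by (simp add: cong_def c0_def)
  have s2: "{x\<in>X. [st x = c + int m] (mod (2 * int m))} = {x\<in>X. [st x = c0 + int m] (mod (2 * int m))}"
    by (simp add: cong_def c0_def mod_add_left_eq)
  show ?thesis
  proof (cases "c0 < int m")
    case True
    have "c0 \<in> {0..<int m}" using True c0 by simp
    then show ?thesis unfolding s1 s2
      by (intro V0[where X=X and st=st and m=m and r=r]) (auto simp: hyp deg)
  next
    case False
    define c1 where "c1 = c0 - int m"
    have c1: "c1 \<in> {0..<int m}" using False c0 by (auto simp: c1_def)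
    have t1: "{x\<in>X. [st x = c0] (mod (2 * int m))} = {x\<in>X. [st x = c1 + int m] (mod (2 * int m))}"
      by (simp add: c1_def)
    have t2: "{x\<in>X. [st x = c0 + int m] (mod (2 * int m))} = {x\<in>X. [st x = c1] (mod (2 * int m))}"
    proof -
      have "c0 + int m = c1 + 2 * int m" by (simp add: c1_def)
      then show ?thesis by (simp add: cong_def)
    qed
    show ?thesis unfolding s1 s2 t1 t2 using c1
      by (intro V0[where X=X and st=st and m=m and r=r, symmetric]) (auto simp: hyp deg)
  qed
qed




lemma mod2m:
  fixes e l m :: nat assumes "l < m"
  shows "e mod (m*2) = l \<longleftrightarrow> e mod m = l \<and> even (e div m)"
    and "e mod (m*2) = l + m \<longleftrightarrow> e mod m = l \<and> odd (e div m)"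
proof -
  have E: "e mod (m*2) = m * (e div m mod 2) + e mod m" by (rule mod_mult2_eq)
  have lt: "e mod m < m" using assms by simp
  have K: "e mod (m*2) = (if even (e div m) then e mod m else m + e mod m)"
  proof (cases "even (e div m)")
    case True
    then have "e div m mod 2 = 0" by presburger
    then show ?thesis using E True by simp
  next
    case False
    then have "e div m mod 2 = 1" by presburger
    then show ?thesis using E False by simp
  qed
  have G1: "\<And>a b. a < m \<Longrightarrow> ((if b then a else m + a) = l) = (a = l \<and> b)" using assms by auto
  have G2: "\<And>a b. a < m \<Longrightarrow> ((if b then a else m + a) = l + m) = (a = l \<and> \<not> b)" using assms by auto
  show "e mod (m*2) = l \<longleftrightarrow> e mod m = l \<and> even (e div m)"
    unfolding K using G1[OF lt] .
  show "e mod (m*2) = l + m \<longleftrightarrow> e mod m = l \<and> odd (e div m)"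
    unfolding K using G2[OF lt] .
qed

lemma pcompose_power': "pcompose (p ^ n) q = (pcompose p q) ^ n"
  by (induction n) (simp_all add: pcompose_mult pcompose_1)




theorem proposition4p7:
  fixes X :: "'a set" and st :: "'a \<Rightarrow> int" and m r :: nat
  assumes "m > 0" and "finite X"
    and hyp: "\<And>l j. l \<in> {0..<int m} \<Longrightarrow> j < r \<Longrightarrow>
      (\<Sum>x\<in>{x\<in>X. [st x = l] (mod (2 * int m))}. (of_int (st x) :: rat) gchoose j)
      = (\<Sum>x\<in>{x\<in>X. [st x = l + int m] (mod (2 * int m))}. (of_int (st x) :: rat) gchoose j)"
  shows "\<forall>N::int. (\<forall>x\<in>X. st x + N \<ge> 0) \<longrightarrow>
    (1 + monom (1::int) m) ^ r dvd (\<Sum>x\<in>X. monom (1::int) (nat (st x + N)))"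
proof (intro allI impI)
  fix N :: int assume Npos: "\<forall>x\<in>X. st x + N \<ge> 0"
  define e where "e = (\<lambda>x. nat (st x + N))"
  have eint: "int (e x) = st x + N" if "x \<in> X" for x using Npos that by (simp add: e_def)
  define M where "M = monom (1::int) m"
  have key: "(1 + M)^r dvd (\<Sum>x\<in>{x\<in>X. e x mod m = l}. monom 1 (e x))" if l: "l < m" for l
  proof -
    define Xl where "Xl = {x\<in>X. e x mod m = l}"
    define t where "t = (\<lambda>x. e x div m)"
    have et: "e x = l + m * t x" if "x \<in> Xl" for x
      using that by (simp add: Xl_def t_def) (metis div_mult_mod_eq add.commute mult.commute)
    have finXl: "finite Xl" using assms(2) by (simp add: Xl_def)
    define A where "A = (\<Sum>x\<in>Xl. monom (1::int) (t x))"
    have "[:1,1:]^r dvd A"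
    proof -
      have "\<forall>j<r. poly ((pderiv^^j) A) (-1) = 0"
      proof (intro allI impI)
        fix j assume j: "j < r"
        define Pj :: "rat poly" where "Pj = (\<Prod>i\<in>{0..<j}. [: (of_int N - of_nat l) / of_nat m - of_nat j + 1 + of_nat i, 1 / of_nat m :])"
        have degP: "degree Pj < r"
          unfolding Pj_def using j assms(1) by (subst degree_prod_eq_sum_degree) auto
        have polyP: "poly Pj (of_int (st x)) = of_int (pochhammer (int (t x) - int j + 1) j)"
          if "x \<in> Xl" for x
        proof -
          have "int (e x) = int l + int m * int (t x)" using et[OF that] by simp
          then have "st x = int l + int m * int (t x) - N" using eint that by (simp add: Xl_def)
          then have "(of_int (st x) :: rat) = of_nat l + of_nat m * of_nat (t x) - of_int N"
            by simp
          then have q: "(of_int N - of_nat l) / of_nat m + of_int (st x) / of_nat m = (of_nat (t x) :: rat)"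
            using assms(1) by (simp add: field_simps)
          have "poly Pj (of_int (st x)) = (\<Prod>i\<in>{0..<j}. (of_nat (t x) :: rat) - of_nat j + 1 + of_nat i)"
            unfolding Pj_def poly_prod by (rule prod.cong) (simp_all add: q[symmetric] algebra_simps)
          also have "\<dots> = pochhammer (of_int (int (t x) - int j + 1)) j"
            unfolding pochhammer_prod by (rule prod.cong) simp_all
          also have "\<dots> = of_int (pochhammer (int (t x) - int j + 1) j)"
            by (rule pochhammer_of_int)
          finally show ?thesis .
        qed
        define C1 where "C1 = {x\<in>X. [st x = int l - N] (mod (2 * int m))}"
        define C2 where "C2 = {x\<in>X. [st x = int l - N + int m] (mod (2 * int m))}"
        have VV: "(\<Sum>x\<in>C1. poly Pj (of_int (st x))) = (\<Sum>x\<in>C2. poly Pj (of_int (st x)))"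
          unfolding C1_def C2_def by (rule V1[where X=X and st=st and m=m and r=r and P=Pj]) (auto simp: hyp degP assms(1))
        have cong_e: "[st x = int l - N + int k] (mod (2 * int m)) \<longleftrightarrow> e x mod (m*2) = l + k"
          if "x \<in> X" "k \<le> m" for x k
        proof -
          have "[st x = int l - N + int k] (mod (2 * int m)) \<longleftrightarrow> [st x + N = int (l + k)] (mod (2 * int m))"
            using cong_add_rcancel[of "st x" N "int l - N + int k" "2 * int m"] by simp
          also have "\<dots> \<longleftrightarrow> [int (e x) = int (l + k)] (mod int (m * 2))"
            using eint[OF that(1)] by (simp add: mult.commute)
          also have "\<dots> \<longleftrightarrow> [e x = l + k] (mod (m * 2))" by (rule cong_int_iff)
          also have "\<dots> \<longleftrightarrow> e x mod (m*2) = l + k"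
            using that l by (simp add: cong_def)
          finally show ?thesis .
        qed
        have C1eq: "C1 = Xl \<inter> {x. even (t x)}"
        proof -
          have "x \<in> C1 \<longleftrightarrow> x \<in> Xl \<inter> {x. even (t x)}" for x
            using cong_e[of x 0] mod2m(1)[OF l, of "e x"] assms(1)
            by (auto simp: C1_def Xl_def t_def)
          then show ?thesis by blast
        qed
        have C2eq: "C2 = Xl \<inter> - {x. even (t x)}"
        proof -
          have "x \<in> C2 \<longleftrightarrow> x \<in> Xl \<inter> - {x. even (t x)}" for x
            using cong_e[of x m] mod2m(2)[OF l, of "e x"] assms(1)
            by (auto simp: C2_def Xl_def t_def)
          then show ?thesis by blast
        qed
        have "(\<Sum>x\<in>Xl. (-1) ^ t x * poly Pj (of_int (st x))) =
              (\<Sum>x\<in>Xl. if even (t x) then poly Pj (of_int (st x)) else - poly Pj (of_int (st x)))"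
          by (rule sum.cong) auto
        also have "\<dots> = (\<Sum>x\<in>C1. poly Pj (of_int (st x))) + (\<Sum>x\<in>C2. - poly Pj (of_int (st x)))"
          unfolding C1eq C2eq by (rule sum.If_cases[OF finXl])
        also have "\<dots> = 0" using VV by (simp add: sum_negf)
        finally have "(\<Sum>x\<in>Xl. (-1) ^ t x * poly Pj (of_int (st x))) = (0::rat)" .
        then have "(\<Sum>x\<in>Xl. (-1) ^ t x * of_int (pochhammer (int (t x) - int j + 1) j)) = (0::rat)"
          using polyP by (simp cong: sum.cong)
        then have "of_int (\<Sum>x\<in>Xl. (-1) ^ t x * pochhammer (int (t x) - int j + 1) j) = (0::rat)"
          by simp
        then have S0: "(\<Sum>x\<in>Xl. (-1) ^ t x * pochhammer (int (t x) - int j + 1) j) = (0::int)"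
          by (simp only: of_int_eq_0_iff)
        have "poly ((pderiv^^j) A) (-1) = (\<Sum>x\<in>Xl. (-1)^j * ((-1) ^ t x * pochhammer (int (t x) - int j + 1) j))"
          unfolding A_def higher_pderiv_sum poly_sum
          by (rule sum.cong) (simp_all add: higher_pderiv_monom_at)
        also have "\<dots> = 0" unfolding sum_distrib_left[symmetric] S0 by simp
        finally show "poly ((pderiv^^j) A) (-1) = 0" .
      qed
      then show ?thesis using root_mult_dvd[of r A "-1"] by simp
    qed
    then obtain B where B: "A = [:1,1:]^r * B" by (elim dvdE)
    have pc: "pcompose [:1,1:] M = 1 + M" by (simp add: pcompose_pCons)
    have "pcompose A M = (1 + M)^r * pcompose B M"
      unfolding B pcompose_mult pcompose_power' pc ..
    moreover have "pcompose A M = (\<Sum>x\<in>Xl. monom 1 (m * t x))"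
      unfolding A_def pcompose_sum pcompose_monom1 M_def monom_power by simp
    ultimately have d: "(1 + M)^r dvd (\<Sum>x\<in>Xl. monom 1 (m * t x))" by (metis dvd_triv_left)
    have "(\<Sum>x\<in>Xl. monom (1::int) (e x)) = monom 1 l * (\<Sum>x\<in>Xl. monom 1 (m * t x))"
      unfolding sum_distrib_left by (rule sum.cong) (simp_all add: et mult_monom)
    then show ?thesis using d unfolding Xl_def by (simp add: dvd_mult)
  qed
  have "(\<Sum>x\<in>X. monom (1::int) (e x)) = (\<Sum>l\<in>{..<m}. \<Sum>x\<in>{x\<in>X. e x mod m = l}. monom 1 (e x))"
    by (rule sum.group[symmetric]) (use assms in auto)
  also have "(1 + M)^r dvd \<dots>" by (rule dvd_sum) (use key in simp)
  finally show "(1 + monom (1::int) m) ^ r dvd (\<Sum>x\<in>X. monom (1::int) (nat (st x + N)))"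
    by (simp add: e_def M_def)
qed


end
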